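(* Let $S$ be a meet semilattice and let $2\leq k\leq\omega$. The following are equivalent: (1) $\exists$ has an $\omega$-strategy in the $(m,k)$-game on $S$ with starting position $(\{a\},\{b\})$ for all $a,b\in S$ with $a\not\leq b$ and for all $2\leq m\leq\omega$; (2) $\exists$ has a $5$-strategy in the $(3,k)$-game on $S$ with starting position $(\{a\},\{b\})$ for all $a,b\in S$ with $a\not\leq b$; (3) $S$ is $k$-distributive.
   Context: Work in ZFC. A meet semilattice $S$ is regarded as a poset. $S$ is $k$-distributive if for all $m<k$ and all $x,y_1,\ldots,y_m\in S$, whenever $x\wedge(y_1\vee\cdots\vee y_m)$ exists in $S$, then $(x\wedge y_1)\vee\cdots\vee(x\wedge y_m)$ also exists in $S$ and the two are equal. For a poset $P$, $2\leq\alpha,\beta\leq\omega$ and $U_0,V\subseteq P$, the $(\alpha,\beta)$-game with starting position $(U_0,V)$ is played between $\forall$ and $\exists$ in rounds $0,1,2,\ldots$; a set $U$ is maintained, initially $U_0$, with $V$ fixed. Each round $\forall$ moves and $\exists$ responds: (1) if $b\geq a$ for some $a\in U$, $\forall$ may play $(b)$ and $\exists$ must add $b$ to $U$; (2) if $A\subseteq U$ with $|A|<\alpha$ and $\bigwedge A$ exists in $P$, $\forall$ may play $A$ and $\exists$ must add $\bigwedge A$ to $U$; (3) if $B\subseteq P$ with $|B|<\beta$ and $\bigvee B$ exists in $P$ and lies in $U$, $\forall$ may play $B$ and $\exists$ must choose some $b\in B$ and add it to $U$. $\forall$ wins in round $n$ if $U\cap V\neq\emptyset$ at the beginning of round $n$.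 $\exists$ has an $n$-strategy if she can guarantee that $\forall$ does not win until at least round $n+1$, and an $\omega$-strategy if she can guarantee that $\forall$ never wins. *)

theory Defs
  imports Main "HOL-Library.Extended_Nat"
begin

definition is_meet_of :: "'a::order set \<Rightarrow> 'a \<Rightarrow> bool" where
  "is_meet_of A c \<longleftrightarrow> (\<forall>a\<in>A. c \<le> a) \<and> (\<forall>y. (\<forall>a\<in>A. y \<le> a) \<longrightarrow> y \<le> c)"

definition is_join_of :: "'a::order set \<Rightarrow> 'a \<Rightarrow> bool" where
  "is_join_of B s \<longleftrightarrow> (\<forall>b\<in>B. b \<le> s) \<and> (\<forall>y. (\<forall>b\<in>B. b \<le> y) \<longrightarrow> s \<le> y)"

text \<open>|A| < alpha for a cardinal alpha with 2 <= alpha <= omega, alpha represented as an enat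
  (infinity = omega).\<close>
definition card_less :: "'a set \<Rightarrow> enat \<Rightarrow> bool" where
  "card_less A \<alpha> \<longleftrightarrow> finite A \<and> enat (card A) < \<alpha>"

definition k_distributive :: "enat \<Rightarrow> 'a::semilattice_inf itself \<Rightarrow> bool" where
  "k_distributive k TYPE('a) \<longleftrightarrow>
     (\<forall>m::nat. enat m < k \<longrightarrow> (\<forall>(x::'a) (y::nat \<Rightarrow> 'a) s.
        is_join_of {y i | i. i < m} s \<longrightarrow> is_join_of {inf x (y i) | i. i < m} (inf x s)))"

text \<open>The moves available to forall in position U: each move is represented by the set of
  positions among which exists may choose her response (a singleton for forced moves (1),(2)).\<close>
definition game_moves :: "enat \<Rightarrow> enat \<Rightarrow> 'a::order set \<Rightarrow> 'a set set set" where
  "game_moves \<alpha> \<beta> U =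
     {{insert b U} | b. \<exists>a\<in>U. a \<le> b}
   \<union> {{insert c U} | A c. A \<subseteq> U \<and> card_less A \<alpha> \<and> is_meet_of A c}
   \<union> {{insert b U | b. b \<in> B} | B s. card_less B \<beta> \<and> is_join_of B s \<and> s \<in> U}"

text \<open>n_strategy alpha beta V n U: exists can guarantee that U meets V at the beginning of none
  of the rounds 0..n, starting from position U.\<close>
fun n_strategy :: "enat \<Rightarrow> enat \<Rightarrow> 'a::order set \<Rightarrow> nat \<Rightarrow> 'a set \<Rightarrow> bool" where
  "n_strategy \<alpha> \<beta> V 0 U \<longleftrightarrow> U \<inter> V = {}"
| "n_strategy \<alpha> \<beta> V (Suc n) U \<longleftrightarrow> U \<inter> V = {} \<and>
     (\<forall>M\<in>game_moves \<alpha> \<beta> U. \<exists>U'\<in>M. n_strategy \<alpha> \<beta> V n U')"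

text \<open>omega_strategy alpha beta V U: exists can guarantee that forall never wins
  (greatest fixed point: the game may go on forever).\<close>
coinductive omega_strategy :: "enat \<Rightarrow> enat \<Rightarrow> 'a::order set \<Rightarrow> 'a set \<Rightarrow> bool"
  for \<alpha> \<beta> V where
  "U \<inter> V = {} \<Longrightarrow> (\<forall>M\<in>game_moves \<alpha> \<beta> U. \<exists>U'\<in>M. omega_strategy \<alpha> \<beta> V U')
   \<Longrightarrow> omega_strategy \<alpha> \<beta> V U"

end

theory Submission
  imports Defs
begin

lemma omega_imp_n:
  "omega_strategy \<alpha> \<beta> V U \<Longrightarrow> n_strategy \<alpha> \<beta> V n U"
proof (induction n arbitrary: U)
  case 0
  then show ?case by (auto elim: omega_strategy.cases)
next
  case (Suc n)
  from Suc.prems show ?case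
    by (cases rule: omega_strategy.cases) (simp, meson Suc.IH)
qed

lemma n_step:
  "n_strategy \<alpha> \<beta> V (Suc n) U \<Longrightarrow> M \<in> game_moves \<alpha> \<beta> U \<Longrightarrow> \<exists>U'\<in>M. n_strategy \<alpha> \<beta> V n U'"
  by simp

lemma n_step1:
  "n_strategy \<alpha> \<beta> V (Suc n) U \<Longrightarrow> {U'} \<in> game_moves \<alpha> \<beta> U \<Longrightarrow> n_strategy \<alpha> \<beta> V n U'"
  by fastforce

definition filt :: "'a::semilattice_inf \<Rightarrow> 'a \<Rightarrow> 'a set \<Rightarrow> bool" where
  "filt a b F \<longleftrightarrow> a \<in> F \<and> b \<notin> F \<and> (\<forall>x\<in>F. \<forall>y. x \<le> y \<longrightarrow> y \<in> F)
      \<and> (\<forall>x\<in>F. \<forall>y\<in>F. inf x y \<in> F)"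

lemma filt_lower:
  assumes "filt a b F" "finite A" "A \<subseteq> F"
  shows "\<exists>d\<in>F. \<forall>x\<in>A. d \<le> x"
  using assms(2,3)
proof (induction A rule: finite_induct)
  case empty
  then show ?case using assms(1) unfolding filt_def by blast
next
  case (insert x A)
  then obtain d where "d \<in> F" "\<forall>z\<in>A. d \<le> z" by auto
  then show ?case using insert.prems assms(1) unfolding filt_def
    by (intro bexI[of _ "inf x d"]) (auto intro: le_infI2)
qed

lemma filt_exists:
  fixes a b :: "'a::semilattice_inf"
  assumes "\<not> a \<le> b"
  shows "\<exists>F. filt a b F \<and> (\<forall>G. filt a b G \<and> F \<subseteq> G \<longrightarrow> G = F)"
proof -
  have "\<exists>M\<in>{F. filt a b F}. \<forall>X\<in>{F. filt a b F}. M \<subseteq> X \<longrightarrow> X = M"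
  proof (rule subset_Zorn_nonempty)
    show "{F. filt a b F} \<noteq> {}"
      using assms unfolding filt_def
      by (rule_tac ex_in_conv[THEN iffD1, OF exI[of _ "{z. a \<le> z}"]]) (auto intro: order_trans)
  next
    fix C assume C: "C \<noteq> {}" "subset.chain {F. filt a b F} C"
    show "\<Union>C \<in> {F. filt a b F}"
      unfolding mem_Collect_eq filt_def
    proof (intro conjI ballI allI impI)
      have Cf: "\<And>F. F \<in> C \<Longrightarrow> filt a b F" using C(2) unfolding subset.chain_def by blast
      obtain F0 where "F0 \<in> C" using C(1) by blast
      then show "a \<in> \<Union>C" using Cf[of F0] unfolding filt_def by blast
      show "b \<notin> \<Union>C"
      proof
        assume "b \<in> \<Union>C"
        then obtain F where "F \<in> C" "b \<in> F" by blast
        then show False using Cf[of F] unfolding filt_def by blast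
      qed
      show "y \<in> \<Union>C" if xC: "x \<in> \<Union>C" and xy: "x \<le> y" for x y
      proof -
        obtain F where "F \<in> C" "x \<in> F" using xC by blast
        then have "y \<in> F" using Cf[of F] xy unfolding filt_def by blast
        then show ?thesis using \<open>F \<in> C\<close> by blast
      qed
      show "inf x y \<in> \<Union>C" if xC: "x \<in> \<Union>C" and yC: "y \<in> \<Union>C" for x y
      proof -
        obtain X Y where XY: "X \<in> C" "Y \<in> C" "x \<in> X" "y \<in> Y" using xC yC by blast
        then have "X \<subseteq> Y \<or> Y \<subseteq> X" using C unfolding subset.chain_def by blast
        then have "inf x y \<in> X \<or> inf x y \<in> Y"
          using XY Cf[of X] Cf[of Y] unfolding filt_def by blast
        then show ?thesis using XY by blast
      qed
    qed
  qed
  then show ?thesis by blast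
qed

lemma filt_prime:
  fixes a b :: "'a::semilattice_inf"
  assumes F: "filt a b F" and max: "\<forall>G. filt a b G \<and> F \<subseteq> G \<longrightarrow> G = F"
    and kd: "k_distributive k TYPE('a)"
    and B: "card_less B k" "is_join_of B s" "s \<in> F"
  shows "\<exists>y\<in>B. y \<in> F"
proof (rule ccontr)
  assume nB: "\<not> (\<exists>y\<in>B. y \<in> F)"
  have "\<exists>f\<in>F. inf f y \<le> b" if "y \<in> B" for y
  proof (rule ccontr)
    assume nf: "\<not> (\<exists>f\<in>F. inf f y \<le> b)"
    define G where "G = {z. \<exists>f\<in>F. inf f y \<le> z}"
    have "filt a b G" unfolding filt_def
    proof (intro conjI ballI allI impI)
      show "a \<in> G" using F unfolding filt_def G_def by (auto intro: bexI[of _ a])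
      show "b \<notin> G" using nf unfolding G_def by auto
      show "z' \<in> G" if "z \<in> G" "z \<le> z'" for z z'
        using that order_trans unfolding G_def by blast
      show "inf z z' \<in> G" if zG: "z \<in> G" and z'G: "z' \<in> G" for z z'
      proof -
        obtain f where "f \<in> F" "inf f y \<le> z" using zG unfolding G_def by blast
        moreover obtain f' where "f' \<in> F" "inf f' y \<le> z'" using z'G unfolding G_def by blast
        moreover have "inf (inf f f') y \<le> inf f y" by (rule inf_mono[OF inf_le1 order_refl])
        moreover have "inf (inf f f') y \<le> inf f' y" by (rule inf_mono[OF inf_le2 order_refl])
        ultimately have "inf (inf f f') y \<le> inf z z'" "inf f f' \<in> F"
          using F unfolding filt_def by (blast intro: le_infI order_trans)+
        then show ?thesis unfolding G_def by blast
      qed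
    qed
    moreover have "F \<subseteq> G" unfolding G_def by (auto intro: le_infI1)
    ultimately have "G = F" using max by blast
    moreover have "y \<in> G" unfolding G_def using F unfolding filt_def by auto
    ultimately show False using nB that by blast
  qed
  then obtain fy where fy: "\<And>y. y \<in> B \<Longrightarrow> fy y \<in> F \<and> inf (fy y) y \<le> b" by metis
  have finB: "finite B" using B(1) unfolding card_less_def by auto
  obtain f where f: "f \<in> F" "\<forall>z\<in>insert s (fy ` B). f \<le> z"
    using filt_lower[OF F, of "insert s (fy ` B)"] finB fy B(3) by auto
  obtain h where h: "bij_betw h {0..<card B} B" using ex_bij_betw_nat_finite[OF finB] by blast
  have Beq: "{h i | i. i < card B} = B" 
  proof -
    have "{h i | i. i < card B} = h ` {0..<card B}" by auto
    then show ?thesis using bij_betw_imp_surj_on[OF h] by simp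
  qed
  have "enat (card B) < k" using B(1) unfolding card_less_def by auto
  then have "is_join_of {inf f (h i) | i. i < card B} (inf f s)"
  proof -
    have "\<forall>(x::'a) (y::nat \<Rightarrow> 'a) s. is_join_of {y i | i. i < card B} s \<longrightarrow>
        is_join_of {inf x (y i) | i. i < card B} (inf x s)"
      using kd \<open>enat (card B) < k\<close> unfolding k_distributive_def by blast
    then have "is_join_of {h i | i. i < card B} s \<longrightarrow>
        is_join_of {inf f (h i) | i. i < card B} (inf f s)" by blast
    then show ?thesis using B(2) Beq by simp
  qed
  moreover have "\<forall>z\<in>{inf f (h i) | i. i < card B}. z \<le> b"
  proof
    fix z assume "z \<in> {inf f (h i) | i. i < card B}"
    then obtain y where y: "y \<in> B" "z = inf f y" using Beq by auto
    have "f \<le> fy y" using f y by auto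
    then have "inf f y \<le> inf (fy y) y" by (rule inf_mono[OF _ order_refl])
    then show "z \<le> b" using fy[OF y(1)] y(2) order_trans by blast
  qed
  ultimately have "inf f s \<le> b" unfolding is_join_of_def by blast
  moreover have "inf f s = f" using f by (auto simp: inf_absorb1)
  ultimately show False using F f unfolding filt_def by blast
qed

lemma dist_imp_omega:
  fixes a b :: "'a::semilattice_inf"
  assumes kd: "k_distributive k TYPE('a)" and ab: "\<not> a \<le> b"
  shows "omega_strategy m k {b} {a}"
proof -
  obtain F where F: "filt a b F" and max: "\<forall>G. filt a b G \<and> F \<subseteq> G \<longrightarrow> G = F"
    using filt_exists[OF ab] by blast
  have step: "U \<inter> {b} = {} \<and> (\<forall>M\<in>game_moves m k U. \<exists>U'\<in>M. U' \<subseteq> F \<or> omega_strategy m k {b} U')"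
    if UF: "U \<subseteq> F" for U
  proof -
    have "b \<notin> F" using F unfolding filt_def by blast
    then have "U \<inter> {b} = {}" using UF by (simp add: subset_iff) (metis)
    moreover have "\<exists>U'\<in>M. U' \<subseteq> F" if MG: "M \<in> game_moves m k U" for M
    proof -
      consider
        (up) c where "M = {insert c U}" "\<exists>x\<in>U. x \<le> c"
      | (meet) A c where "M = {insert c U}" "A \<subseteq> U" "card_less A m" "is_meet_of A c"
      | (join) B s where "M = {insert y U | y. y \<in> B}" "card_less B k" "is_join_of B s" "s \<in> U"
      proof -
        have "M \<in> {{insert b U} | b. \<exists>a\<in>U. a \<le> b}
          \<or> M \<in> {{insert c U} | A c. A \<subseteq> U \<and> card_less A m \<and> is_meet_of A c}
          \<or> M \<in> {{insert b U | b. b \<in> B} | B s. card_less B k \<and> is_join_of B s \<and> s \<in> U}"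
          using MG unfolding game_moves_def by (simp only: Un_iff disj_assoc)
        then show ?thesis
        proof (elim disjE)
          assume "M \<in> {{insert b U} | b. \<exists>a\<in>U. a \<le> b}"
          then obtain c where "M = {insert c U}" "\<exists>x\<in>U. x \<le> c" by (simp only: mem_Collect_eq) blast
          then show ?thesis using up by blast
        next
          assume "M \<in> {{insert c U} | A c. A \<subseteq> U \<and> card_less A m \<and> is_meet_of A c}"
          then obtain A c where "M = {insert c U}" "A \<subseteq> U" "card_less A m" "is_meet_of A c"
            by (simp only: mem_Collect_eq) blast
          then show ?thesis using meet by blast
        next
          assume "M \<in> {{insert b U | b. b \<in> B} | B s. card_less B k \<and> is_join_of B s \<and> s \<in> U}"
          then obtain B s where "M = {insert y U | y. y \<in> B}" "card_less B k" "is_join_of B s" "s \<in> U"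
            by (simp only: mem_Collect_eq) blast
          then show ?thesis using join by blast
        qed
      qed
      then show ?thesis
      proof cases
        case up then show ?thesis using UF F unfolding filt_def by blast
      next
        case meet
        obtain d where "d \<in> F" "\<forall>x\<in>A. d \<le> x"
          using filt_lower[OF F, of A] meet UF unfolding card_less_def by auto
        then have "d \<le> c" using meet(4) unfolding is_meet_of_def by blast
        then have "c \<in> F" using \<open>d \<in> F\<close> F unfolding filt_def by blast
        then show ?thesis using meet UF by auto
      next
        case join
        then obtain y where "y \<in> B" "y \<in> F"
          using filt_prime[OF F max kd join(2,3)] UF by blast
        then show ?thesis using join UF by auto
      qed
    qed
    ultimately show ?thesis by blast
  qed
  have "omega_strategy m k {b} U" if "U \<subseteq> F" for U
    using that
  proof (rule omega_strategy.coinduct[of "\<lambda>U. U \<subseteq> F"])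
    fix x assume "x \<subseteq> F"
    then show "\<exists>U. x = U \<and> U \<inter> {b} = {} \<and>
         (\<forall>M\<in>game_moves m k U. \<exists>U'\<in>M. U' \<subseteq> F \<or> omega_strategy m k {b} U')"
      using step[of x] by blast
  qed
  then show ?thesis using F unfolding filt_def by blast
qed

lemma n_imp_dist:
  assumes k2: "2 \<le> k"
    and H: "\<forall>(a::'a::semilattice_inf) b. \<not> a \<le> b \<longrightarrow> n_strategy 3 k {b} 5 {a}"
  shows "k_distributive k TYPE('a)"
  unfolding k_distributive_def
proof (intro allI impI)
  fix m :: nat and x :: 'a and y :: "nat \<Rightarrow> 'a" and s :: 'a
  assume mk: "enat m < k" and J: "is_join_of {y i | i. i < m} s"
  show "is_join_of {inf x (y i) | i. i < m} (inf x s)"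
  proof (rule ccontr)
    assume nJ: "\<not> ?thesis"
    have ub: "\<forall>z\<in>{inf x (y i) | i. i < m}. z \<le> inf x s"
      using J unfolding is_join_of_def by (auto intro: le_infI2)
    then obtain u where u: "\<forall>z\<in>{inf x (y i) | i. i < m}. z \<le> u" "\<not> inf x s \<le> u"
      using nJ unfolding is_join_of_def by blast
    define a where "a = inf x s"
    define V where "V = {u}"
    have n5: "n_strategy 3 k V (Suc 4) {a}" using H u(2) unfolding a_def V_def by simp
    have "{insert x {a}} \<in> game_moves 3 k {a}"
      unfolding game_moves_def a_def by auto
    then have n4: "n_strategy 3 k V (Suc 3) {x, a}" using n_step1[OF n5] by simp
    have "{insert s {x, a}} \<in> game_moves 3 k {x, a}"
      unfolding game_moves_def a_def by auto
    then have n3: "n_strategy 3 k V (Suc 2) {s, x, a}" using n_step1[OF n4] by simp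
    have two: "(2::nat) = Suc 1" by simp
    let ?B = "{y i | i. i < m}"
    have finB: "finite ?B" by simp
    have "card ?B \<le> m"
    proof -
      have "?B = y ` {..<m}" by auto
      then show ?thesis using card_image_le[of "{..<m}" y] by simp
    qed
    then have "enat (card ?B) < k" using mk by (meson enat_ord_simps(1) le_less_trans)
    then have "{insert z {s, x, a} | z. z \<in> ?B} \<in> game_moves 3 k {s, x, a}"
      unfolding game_moves_def card_less_def using finB J by blast
    then have "\<exists>U'\<in>{insert z {s, x, a} | z. z \<in> ?B}. n_strategy 3 k V (Suc 1) U'"
      by (rule n_step[OF n3[unfolded two]])
    then obtain j where j: "j < m" "n_strategy 3 k V (Suc 1) (insert (y j) {s, x, a})"
      by blast
    let ?U = "insert (y j) {s, x, a}"
    have cA: "card_less {x, y j} 3"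
      unfolding card_less_def
    proof
      have "card {x, y j} \<le> 2" by (simp add: card_insert_le_m1)
      then show "enat (card {x, y j}) < 3"
        by (metis enat_ord_simps(2) less_Suc_eq_le numeral_eq_enat numeral_2_eq_2 numeral_3_eq_3)
    qed simp
    have im: "is_meet_of {x, y j} (inf x (y j))" unfolding is_meet_of_def
      by (simp add: le_inf_iff)
    have AU: "{x, y j} \<subseteq> ?U" by blast
    have "{insert (inf x (y j)) ?U} \<in> {{insert c ?U} | A c. A \<subseteq> ?U \<and> card_less A 3 \<and> is_meet_of A c}"
      using AU cA im by blast
    then have "{insert (inf x (y j)) ?U} \<in> game_moves 3 k ?U"
      unfolding game_moves_def by (rule UnI2[THEN UnI1])
    then have n1: "n_strategy 3 k V (Suc 0) (insert (inf x (y j)) ?U)"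
      using n_step1[OF j(2)] by simp
    have "inf x (y j) \<le> u" using u(1) j(1) by blast
    then have "{insert u (insert (inf x (y j)) ?U)} \<in> {{insert b (insert (inf x (y j)) ?U)} | b. \<exists>a\<in>insert (inf x (y j)) ?U. a \<le> b}"
      by blast
    then have "{insert u (insert (inf x (y j)) ?U)} \<in> game_moves 3 k (insert (inf x (y j)) ?U)"
      unfolding game_moves_def by (rule UnI1[THEN UnI1])
    then have "n_strategy 3 k V 0 (insert u (insert (inf x (y j)) ?U))"
      using n_step1[OF n1] by simp
    then show False unfolding V_def by simp
  qed
qed

theorem proposition6p2:
  fixes k :: enat
  assumes "2 \<le> k"
  shows "((\<forall>(a::'a::semilattice_inf) b. \<not> a \<le> b \<longrightarrow>
             (\<forall>m::enat. 2 \<le> m \<longrightarrow> omega_strategy m k {b} {a}))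
          \<longleftrightarrow> (\<forall>(a::'a) b. \<not> a \<le> b \<longrightarrow> n_strategy 3 k {b} 5 {a}))
       \<and> ((\<forall>(a::'a) b. \<not> a \<le> b \<longrightarrow> n_strategy 3 k {b} 5 {a})
          \<longleftrightarrow> k_distributive k TYPE('a))"
proof -
  have 32: "(2::enat) \<le> 3"
    by (simp add: numeral_eq_enat)
  have A: "(\<forall>(a::'a) b. \<not> a \<le> b \<longrightarrow> (\<forall>m::enat. 2 \<le> m \<longrightarrow> omega_strategy m k {b} {a}))
      \<Longrightarrow> (\<forall>(a::'a) b. \<not> a \<le> b \<longrightarrow> n_strategy 3 k {b} 5 {a})"
    using 32 omega_imp_n by blast
  have B: "(\<forall>(a::'a) b. \<not> a \<le> b \<longrightarrow> n_strategy 3 k {b} 5 {a}) \<Longrightarrow> k_distributive k TYPE('a)"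
    using n_imp_dist[OF assms] by blast
  have C: "k_distributive k TYPE('a) \<Longrightarrow>
      (\<forall>(a::'a) b. \<not> a \<le> b \<longrightarrow> (\<forall>m::enat. 2 \<le> m \<longrightarrow> omega_strategy m k {b} {a}))"
    using dist_imp_omega by blast
  show ?thesis using A B C by blast
qed

end
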